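(* Let $n\ge1$ and $f\in L^2([0,1]^n)$. Let $V_L$ be the linear span in $L^2([0,1]^n)$ of $\mathrm{os}_1,\ldots,\mathrm{os}_n,\mathrm{os}_{n+1}$, and let $f_L$ be the (unique) element of $V_L$ minimizing $\|f-g\|^2=\int_{[0,1]^n}(f(\mathbf{x})-g(\mathbf{x}))^2\,d\mathbf{x}$ over $g\in V_L$. Then $f_L=\sum_{j=1}^{n+1}a_j\,\mathrm{os}_j$, where $$a_k=\begin{cases}\langle f,g_k\rangle, & \text{if } k\in\{1,\ldots,n\},\\ (n+1)^2\langle f,1\rangle-(n+1)(n+2)\langle f,\mathrm{os}_n\rangle, & \text{if } k=n+1,\end{cases}$$ with $g_k=-(n+1)(n+2)\,(\mathrm{os}_{k+1}-2\,\mathrm{os}_k+\mathrm{os}_{k-1})$.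
   Context: $L^2([0,1]^n)$ is the space of square integrable functions $[0,1]^n\to\mathbb{R}$ modulo equality almost everywhere, with inner product $\langle f,g\rangle=\int_{[0,1]^n}f(\mathbf{x})g(\mathbf{x})\,d\mathbf{x}$ (Lebesgue measure). For $\mathbf{x}\in[0,1]^n$, $x_{(1)}\le\cdots\le x_{(n)}$ denote its coordinates in ascending order, $\mathrm{os}_k(\mathbf{x})=x_{(k)}$ for $k\in\{1,\ldots,n\}$, and by convention $\mathrm{os}_0\equiv 0$ and $\mathrm{os}_{n+1}\equiv1$. *)

theory Defs
  imports "HOL-Analysis.Analysis" "HOL-Library.Multiset"
begin

definition unit_cube :: "(real^'n) set" where
  "unit_cube = {x. \<forall>i. 0 \<le> x $ i \<and> x $ i \<le> 1}"

text \<open>Order statistics: os k x is the k-th smallest coordinate (1 \<le> k \<le> n),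
  with os 0 = 0 and os (n+1) = 1 (and, irrelevantly, 1 for larger k).\<close>
definition os :: "nat \<Rightarrow> real^'n \<Rightarrow> real" where
  "os k x = (if k = 0 then 0 else if k > CARD('n) then 1
             else sorted_list_of_multiset (image_mset (\<lambda>i. x $ i) (mset_set UNIV)) ! (k - 1))"

definition L2_cube :: "(real^'n \<Rightarrow> real) set" where
  "L2_cube = {f. f \<in> borel_measurable (lebesgue_on unit_cube)
               \<and> integrable (lebesgue_on unit_cube) (\<lambda>x. (f x)\<^sup>2)}"

definition L2_inner :: "(real^'n \<Rightarrow> real) \<Rightarrow> (real^'n \<Rightarrow> real) \<Rightarrow> real" where
  "L2_inner f g = (\<integral>x. f x * g x \<partial>(lebesgue_on unit_cube))"

definition L2_dist2 :: "(real^'n \<Rightarrow> real) \<Rightarrow> (real^'n \<Rightarrow> real) \<Rightarrow> real" where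
  "L2_dist2 f g = (\<integral>x. (f x - g x)\<^sup>2 \<partial>(lebesgue_on unit_cube))"

definition V_L :: "(real^'n \<Rightarrow> real) set" where
  "V_L = {g. \<exists>c :: nat \<Rightarrow> real. g = (\<lambda>x. \<Sum>j=1..CARD('n)+1. c j * os j x)}"

definition g_fun :: "nat \<Rightarrow> real^'n \<Rightarrow> real" where
  "g_fun k x = - (real CARD('n) + 1) * (real CARD('n) + 2)
                 * (os (k+1) x - 2 * os k x + os (k-1) x)"

definition coef :: "(real^'n \<Rightarrow> real) \<Rightarrow> nat \<Rightarrow> real" where
  "coef f k = (if k \<le> CARD('n) then L2_inner f (g_fun k :: real^'n \<Rightarrow> real)
     else (real CARD('n) + 1)\<^sup>2 * L2_inner f (\<lambda>_. 1)
          - (real CARD('n) + 1) * (real CARD('n) + 2) * L2_inner f (os CARD('n)))"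

end

theory Submission
  imports Defs
begin



lemma sorted_nth_le_iff:
  fixes L :: "real list"
  assumes "sorted L" "i < length L"
  shows "L ! i \<le> t \<longleftrightarrow> i < length (filter (\<lambda>v. v \<le> t) L)"
  using assms
proof (induction L arbitrary: i)
  case Nil then show ?case by simp
next
  case (Cons a L)
  show ?case
  proof (cases "a \<le> t")
    case True
    then show ?thesis using Cons by (cases i) auto
  next
    case False
    have "\<forall>v\<in>set L. t < v" using Cons.prems(1) False by auto
    then have "filter (\<lambda>v. v \<le> t) L = []" by (auto simp: filter_empty_conv)
    moreover have "t < (a # L) ! i"
    proof (cases i)
      case 0 then show ?thesis using False by simp
    next
      case (Suc j) then show ?thesis using Cons.prems \<open>\<forall>v\<in>set L. t < v\<close> by auto
    qed
    ultimately show ?thesis using False by auto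
  qed
qed

definition cnt :: "real^'n \<Rightarrow> real \<Rightarrow> nat" where
  "cnt x s = card {m. x $ m \<le> s}"

lemma os_list:
  fixes x :: "real^'n"
  defines "L \<equiv> sorted_list_of_multiset (image_mset (\<lambda>i. x $ i) (mset_set UNIV))"
  shows "sorted L" "length L = CARD('n)" "length (filter (\<lambda>v. v \<le> t) L) = cnt x t"
    "set L = range (\<lambda>i. x $ i)"
proof -
  show "sorted L" unfolding L_def by simp
  have m: "mset L = image_mset (\<lambda>i. x $ i) (mset_set UNIV)" unfolding L_def by simp
  then show "length L = CARD('n)" by (metis size_image_mset size_mset size_mset_set)
  have "length (filter (\<lambda>v. v \<le> t) L) = size (filter_mset (\<lambda>v. v \<le> t) (mset L))"
    by (metis mset_filter size_mset)
  also have "\<dots> = size (mset_set {m. x $ m \<le> t})"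
    by (simp add: m filter_mset_image_mset filter_mset_mset_set)
  also have "\<dots> = cnt x t" by (simp add: cnt_def)
  finally show "length (filter (\<lambda>v. v \<le> t) L) = cnt x t" .
  show "set L = range (\<lambda>i. x $ i)" unfolding L_def by simp
qed

lemma os_le_iff:
  fixes x :: "real^'n"
  assumes "1 \<le> k" "k \<le> CARD('n)"
  shows "os k x \<le> t \<longleftrightarrow> k \<le> cnt x t"
proof -
  define L where "L = sorted_list_of_multiset (image_mset (\<lambda>i. x $ i) (mset_set (UNIV::'n set)))"
  have "os k x = L ! (k-1)" using assms by (simp add: os_def L_def)
  then show ?thesis using sorted_nth_le_iff[of L "k-1" t] os_list(2)[where x=x] os_list(3)[where x=x and t=t] assms
    unfolding L_def by auto
qed

lemma os_less_iff:
  fixes x :: "real^'n"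
  assumes "k \<le> CARD('n) + 1" "0 \<le> s" "s < 1"
  shows "s < os k x \<longleftrightarrow> cnt x s < k"
proof -
  have "cnt x s \<le> CARD('n)" unfolding cnt_def by (simp add: card_mono)
  then show ?thesis using assms os_le_iff[of k x s]
    by (cases "k = 0"; cases "k = CARD('n) + 1") (auto simp: os_def not_le)
qed

lemma os_range:
  fixes x :: "real^'n"
  assumes "x \<in> unit_cube"
  shows "0 \<le> os k x \<and> os k x \<le> 1"
proof -
  define L where "L = sorted_list_of_multiset (image_mset (\<lambda>i. x $ i) (mset_set (UNIV::'n set)))"
  { assume "1 \<le> k" "k \<le> CARD('n)"
    then have "os k x = L ! (k-1)" by (simp add: os_def L_def)
    moreover have "L ! (k-1) \<in> set L" using os_list(2)[of x] \<open>1 \<le> k\<close> \<open>k \<le> CARD('n)\<close>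
      unfolding L_def by (intro nth_mem) auto
    ultimately have "os k x \<in> range (\<lambda>i. x $ i)" using os_list(4)[of x] unfolding L_def by auto
    then have ?thesis using assms by (auto simp: unit_cube_def) }
  then show ?thesis by (cases "k = 0"; cases "k \<le> CARD('n)") (auto simp: os_def)
qed





lemma bij_axis: "bij_betw (\<lambda>i::'n. axis i (1::real)) UNIV (Basis :: (real^'n) set)"
  unfolding bij_betw_def inj_on_def
  by (auto simp: Basis_vec_def axis_eq_axis)

lemma prod_Basis_cart:
  "(\<Prod>b\<in>(Basis :: (real^'n) set). g b) = (\<Prod>m\<in>UNIV. g (axis m 1))"
  using prod.reindex_bij_betw[OF bij_axis, of g] by simp

lemma prod_indicator_measure:
  fixes I :: "'n::finite \<Rightarrow> real set"
  assumes "\<And>m. I m \<in> sets borel"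
  shows "(\<integral>\<^sup>+x. (\<Prod>m\<in>UNIV. indicator (I m) (x$m)) \<partial>(lborel::(real^'n) measure))
         = (\<Prod>m\<in>UNIV. emeasure lborel (I m))"
proof -
  have "(\<integral>\<^sup>+x. (\<Prod>b\<in>Basis. indicator (I (axis_index b)) (x \<bullet> b)) \<partial>(lborel::(real^'n) measure))
     = (\<Prod>b\<in>(Basis::(real^'n) set). integral\<^sup>N lborel (indicator (I (axis_index b))))"
    by (rule nn_integral_lborel_prod[where f="\<lambda>b. indicator (I (axis_index b))"]) (use assms in auto)
  also have "\<dots> = (\<Prod>m\<in>UNIV. emeasure lborel (I m))"
    unfolding prod_Basis_cart using assms by (simp add: axis_index_def axis_eq_axis)
  finally show ?thesis
    unfolding prod_Basis_cart by (simp add: inner_axis)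
qed







lemma prod_indicator_iff:
  "(\<Prod>m\<in>UNIV. indicator (P m) (x$m) :: 'a::comm_semiring_1) = (if \<forall>m. x$m \<in> P m then 1 else 0)"
proof (cases "\<forall>m. x$m \<in> P m")
  case True then show ?thesis by simp
next
  case False
  then obtain m where "x$m \<notin> P m" by auto
  then have "(\<Prod>m\<in>UNIV. indicator (P m) (x$m) :: 'a) = 0"
    by (intro prod_zero) (auto intro!: exI[of _ m])
  then show ?thesis using False by simp
qed

definition pat :: "real \<Rightarrow> real \<Rightarrow> 'n set \<Rightarrow> 'n set \<Rightarrow> 'n \<Rightarrow> real set" where
  "pat s t A B m = (if m \<in> A then {0..s} else if m \<in> B then {s<..t} else {t<..1})"

lemma pat_iff:
  fixes x :: "real^'n"
  assumes "A \<subseteq> B" "0 \<le> s" "s \<le> t" "t \<le> 1"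
  shows "(\<forall>m. x$m \<in> pat s t A B m) \<longleftrightarrow>
           x \<in> unit_cube \<and> {m. x$m \<le> s} = A \<and> {m. x$m \<le> t} = B"
proof
  assume h: "\<forall>m. x$m \<in> pat s t A B m"
  have "x \<in> unit_cube" unfolding unit_cube_def
  proof (intro CollectI allI)
    fix m show "0 \<le> x$m \<and> x$m \<le> 1" using h[rule_format, of m] assms
      by (auto simp: pat_def split: if_splits)
  qed
  moreover have "{m. x$m \<le> s} = A"
  proof (intro set_eqI iffI)
    fix m assume "m \<in> {m. x$m \<le> s}" then show "m \<in> A"
      using h[rule_format, of m] assms by (auto simp: pat_def split: if_splits)
  next
    fix m assume "m \<in> A" then show "m \<in> {m. x$m \<le> s}"
      using h[rule_format, of m] assms by (auto simp: pat_def split: if_splits)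
  qed
  moreover have "{m. x$m \<le> t} = B"
  proof (intro set_eqI iffI)
    fix m assume "m \<in> {m. x$m \<le> t}" then show "m \<in> B"
      using h[rule_format, of m] assms by (auto simp: pat_def split: if_splits)
  next
    fix m assume "m \<in> B" then show "m \<in> {m. x$m \<le> t}"
      using h[rule_format, of m] assms by (auto simp: pat_def split: if_splits)
  qed
  ultimately show "x \<in> unit_cube \<and> {m. x$m \<le> s} = A \<and> {m. x$m \<le> t} = B" by blast
next
  assume h: "x \<in> unit_cube \<and> {m. x$m \<le> s} = A \<and> {m. x$m \<le> t} = B"
  show "\<forall>m. x$m \<in> pat s t A B m"
  proof
    fix m
    have "0 \<le> x$m" "x$m \<le> 1" using h by (auto simp: unit_cube_def)
    then show "x$m \<in> pat s t A B m" using h by (auto simp: pat_def)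
  qed
qed

lemma event_indicator:
  fixes x :: "real^'n"
  assumes "0 \<le> s" "s \<le> t" "t \<le> 1"
  shows "(indicator {x. x \<in> unit_cube \<and> cnt x s < i \<and> cnt x t < j} x :: ennreal) =
    (\<Sum>B\<in>Pow UNIV. \<Sum>A\<in>Pow B. if card A < i \<and> card B < j
        then (\<Prod>m\<in>UNIV. indicator (pat s t A B m) (x$m)) else 0)"
proof -
  define A0 where "A0 = {m. x$m \<le> s}"
  define B0 where "B0 = {m. x$m \<le> t}"
  have A0B0: "A0 \<subseteq> B0" using assms by (auto simp: A0_def B0_def)
  have "(\<Sum>B\<in>Pow UNIV. \<Sum>A\<in>Pow B. if card A < i \<and> card B < j
        then (\<Prod>m\<in>UNIV. indicator (pat s t A B m) (x$m)) else (0::ennreal))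
    = (\<Sum>B\<in>Pow UNIV. \<Sum>A\<in>Pow B. if A = A0 \<and> B = B0 then
        (if card A0 < i \<and> card B0 < j \<and> x \<in> unit_cube then 1 else 0) else 0)"
  proof (intro sum.cong refl)
    fix B A assume "B \<in> Pow (UNIV::'n set)" "A \<in> Pow B"
    then have "A \<subseteq> B" by auto
    show "(if card A < i \<and> card B < j
        then (\<Prod>m\<in>UNIV. indicator (pat s t A B m) (x$m)) else (0::ennreal))
      = (if A = A0 \<and> B = B0 then
        (if card A0 < i \<and> card B0 < j \<and> x \<in> unit_cube then 1 else 0) else 0)"
      unfolding prod_indicator_iff pat_iff[OF \<open>A \<subseteq> B\<close> assms] A0_def B0_def by auto
  qed
  also have "\<dots> = (\<Sum>B\<in>Pow UNIV. if B = B0 then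
        (if card A0 < i \<and> card B0 < j \<and> x \<in> unit_cube then 1 else 0) else 0)"
  proof (intro sum.cong refl)
    fix B :: "'n set"
    show "(\<Sum>A\<in>Pow B. if A = A0 \<and> B = B0 then
        (if card A0 < i \<and> card B0 < j \<and> x \<in> unit_cube then 1 else 0) else (0::ennreal)) =
      (if B = B0 then (if card A0 < i \<and> card B0 < j \<and> x \<in> unit_cube then 1 else 0) else 0)"
      using A0B0 by (cases "B = B0") (simp_all add: sum.delta')
  qed
  also have "\<dots> = (if card A0 < i \<and> card B0 < j \<and> x \<in> unit_cube then 1 else 0)"
    by (simp add: sum.delta')
  also have "\<dots> = indicator {x. x \<in> unit_cube \<and> cnt x s < i \<and> cnt x t < j} x"
    by (auto simp: A0_def B0_def cnt_def)
  finally show ?thesis by simp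
qed



lemma sum_Pow_card:
  assumes "finite S"
  shows "(\<Sum>A\<in>Pow S. g (card A)) = (\<Sum>k\<le>card S. of_nat (card S choose k) * (g k :: 'a::comm_semiring_1))"
proof -
  have "(\<Sum>A\<in>Pow S. g (card A)) = (\<Sum>k\<le>card S. \<Sum>A\<in>{A\<in>Pow S. card A = k}. g (card A))"
    by (rule sum.group[symmetric]) (use assms in \<open>auto intro: card_mono\<close>)
  also have "\<dots> = (\<Sum>k\<le>card S. of_nat (card S choose k) * g k)"
  proof (intro sum.cong refl)
    fix k
    have "{A\<in>Pow S. card A = k} = {A. A \<subseteq> S \<and> card A = k}" by auto
    then have "card {A\<in>Pow S. card A = k} = card S choose k" using n_subsets[OF assms] by simp
    then show "(\<Sum>A\<in>{A\<in>Pow S. card A = k}. g (card A)) = of_nat (card S choose k) * g k"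
      by simp
  qed
  finally show ?thesis .
qed



lemma prod_len:
  fixes A B :: "'n::finite set"
  assumes "A \<subseteq> B"
  shows "(\<Prod>m\<in>UNIV. (if m\<in>A then s else if m\<in>B then t-s else 1-t)) =
     s^card A * (t-s)^(card B - card A) * ((1::real)-t)^(CARD('n) - card B)"
proof -
  have "(\<Prod>m\<in>UNIV. (if m\<in>A then s else if m\<in>B then t-s else 1-t)) =
      (\<Prod>m\<in>A. s) * (\<Prod>m\<in>-A. if m\<in>B then t-s else 1-t)"
    by (subst prod.If_cases) (auto simp: Collect_mem_eq)
  also have "(\<Prod>m\<in>-A. if m\<in>B then t-s else 1-t) = (\<Prod>m\<in>B-A. t-s) * (\<Prod>m\<in>-B. 1-t)"
  proof -
    have e: "-A \<inter> B = B - A" "B \<inter> -A = B - A" "-A \<inter> -B = -B" "-B \<inter> -A = -B" using assms by auto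
    show ?thesis by (subst prod.If_cases) (auto simp: e Int_commute)
  qed
  also have "(\<Prod>m\<in>B-A. t-s) = (t-s)^(card B - card A)"
    using assms by (simp add: card_Diff_subset)
  also have "(\<Prod>m\<in>-B. 1-t) = (1-t)^(CARD('n) - card B)"
    by (simp add: Compl_eq_Diff_UNIV card_Diff_subset)
  finally show ?thesis by simp
qed

definition Wn :: "nat \<Rightarrow> nat \<Rightarrow> nat \<Rightarrow> real \<Rightarrow> real \<Rightarrow> real" where
  "Wn n i j s t = (\<Sum>b\<le>n. \<Sum>a\<le>b. if a < i \<and> b < j then
     real (n choose b) * real (b choose a) * (s^a * (t-s)^(b-a) * (1-t)^(n-b)) else 0)"

lemma pattern_measure:
  assumes "0 \<le> s" "s \<le> t" "t \<le> 1"
  shows "(\<integral>\<^sup>+x. indicator {x::real^'n. x \<in> unit_cube \<and> cnt x s < i \<and> cnt x t < j} x \<partial>lborel)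
     = ennreal (Wn CARD('n) i j s t)"
proof -
  have meas: "(\<lambda>x::real^'n. \<Prod>m\<in>UNIV. indicator (pat s t A B m) (x$m) :: ennreal) \<in> borel_measurable lborel"
    for A B :: "'n set"
    by (intro borel_measurable_prod_ennreal) (auto simp: pat_def)
  have "(\<integral>\<^sup>+x. indicator {x::real^'n. x \<in> unit_cube \<and> cnt x s < i \<and> cnt x t < j} x \<partial>lborel)
    = (\<integral>\<^sup>+x. (\<Sum>B\<in>Pow UNIV. \<Sum>A\<in>Pow B. if card A < i \<and> card B < j
        then (\<Prod>m\<in>UNIV. indicator (pat s t A B m) ((x::real^'n)$m)) else 0) \<partial>lborel)"
    apply (rule nn_integral_cong)
    apply (rule event_indicator[OF assms])
    done
  also have "\<dots> = (\<Sum>B\<in>Pow UNIV. \<Sum>A\<in>Pow B. if card A < i \<and> card B < j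
        then (\<integral>\<^sup>+x. (\<Prod>m\<in>UNIV. indicator (pat s t A B m) ((x::real^'n)$m)) \<partial>lborel) else 0)"
    using meas apply (simp add: nn_integral_sum)
    apply (intro sum.cong refl)
    apply auto
    done
  also have "\<dots> = (\<Sum>B\<in>Pow (UNIV::'n set). \<Sum>A\<in>Pow B. if card A < i \<and> card B < j
        then ennreal (s^card A * (t-s)^(card B - card A) * (1-t)^(CARD('n) - card B)) else 0)"
  proof -
    have key: "(\<integral>\<^sup>+x. (\<Prod>m\<in>UNIV. indicator (pat s t A B m) ((x::real^'n)$m)) \<partial>lborel)
      = ennreal (s^card A * (t-s)^(card B - card A) * (1-t)^(CARD('n) - card B))"
      if AB: "A \<subseteq> B" for A B :: "'n set"
    proof -
    have "(\<integral>\<^sup>+x. (\<Prod>m\<in>UNIV. indicator (pat s t A B m) ((x::real^'n)$m)) \<partial>lborel)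
       = (\<Prod>m\<in>UNIV. emeasure lborel (pat s t A B m))"
      by (rule prod_indicator_measure) (auto simp: pat_def)
    also have "\<dots> = (\<Prod>m\<in>UNIV. ennreal (if m\<in>A then s else if m\<in>B then t-s else 1-t))"
      using assms by (intro prod.cong refl) (auto simp: pat_def emeasure_lborel_Ioc)
    also have "\<dots> = ennreal (\<Prod>m\<in>UNIV. (if m\<in>A then s else if m\<in>B then t-s else 1-t))"
      using assms by (intro prod_ennreal) auto
    finally show ?thesis
      using prod_len[OF AB] by simp
    qed
    show ?thesis by (intro sum.cong refl) (auto simp: key)
  qed
  also have "\<dots> = ennreal (\<Sum>B\<in>Pow (UNIV::'n set). \<Sum>A\<in>Pow B. if card A < i \<and> card B < j
        then s^card A * (t-s)^(card B - card A) * (1-t)^(CARD('n) - card B) else 0)"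
  proof -
    have nn: "0 \<le> (if card A < i \<and> card B < j
        then s^card A * (t-s)^(card B - card A) * (1-t)^(CARD('n) - card B) else 0)" for A B :: "'n set"
      using assms by auto
    have "(\<Sum>B\<in>Pow (UNIV::'n set). \<Sum>A\<in>Pow B. if card A < i \<and> card B < j
        then ennreal (s^card A * (t-s)^(card B - card A) * (1-t)^(CARD('n) - card B)) else 0)
      = (\<Sum>B\<in>Pow (UNIV::'n set). \<Sum>A\<in>Pow B. ennreal (if card A < i \<and> card B < j
        then s^card A * (t-s)^(card B - card A) * (1-t)^(CARD('n) - card B) else 0))"
      by (intro sum.cong refl) simp
    also have "\<dots> = (\<Sum>B\<in>Pow (UNIV::'n set). ennreal (\<Sum>A\<in>Pow B. (if card A < i \<and> card B < j
        then s^card A * (t-s)^(card B - card A) * (1-t)^(CARD('n) - card B) else 0)))"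
      by (intro sum.cong refl sum_ennreal nn)
    also have "\<dots> = ennreal (\<Sum>B\<in>Pow (UNIV::'n set). (\<Sum>A\<in>Pow B. (if card A < i \<and> card B < j
        then s^card A * (t-s)^(card B - card A) * (1-t)^(CARD('n) - card B) else 0)))"
      by (intro sum_ennreal sum_nonneg nn)
    finally show ?thesis .
  qed
  also have "(\<Sum>B\<in>Pow (UNIV::'n set). \<Sum>A\<in>Pow B. if card A < i \<and> card B < j
        then s^card A * (t-s)^(card B - card A) * (1-t)^(CARD('n) - card B) else 0)
     = Wn CARD('n) i j s t"
  proof -
    have "(\<Sum>B\<in>Pow (UNIV::'n set). \<Sum>A\<in>Pow B. if card A < i \<and> card B < j
        then s^card A * (t-s)^(card B - card A) * (1-t)^(CARD('n) - card B) else 0)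
      = (\<Sum>B\<in>Pow (UNIV::'n set). \<Sum>a\<le>card B. real (card B choose a) * (if a < i \<and> card B < j
        then s^a * (t-s)^(card B - a) * (1-t)^(CARD('n) - card B) else 0))"
      by (intro sum.cong refl sum_Pow_card[where g="\<lambda>a. if a < i \<and> card _ < j
        then s^a * (t-s)^(card _ - a) * (1-t)^(CARD('n) - card _) else 0"]) auto
    also have "\<dots> = (\<Sum>b\<le>CARD('n). real (CARD('n) choose b) * (\<Sum>a\<le>b. real (b choose a) * (if a < i \<and> b < j
        then s^a * (t-s)^(b - a) * (1-t)^(CARD('n) - b) else 0)))"
      using sum_Pow_card[of "UNIV::'n set" "\<lambda>b. \<Sum>a\<le>b. real (b choose a) * (if a < i \<and> b < j
        then s^a * (t-s)^(b - a) * (1-t)^(CARD('n) - b) else 0)"] by simp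
    also have "\<dots> = Wn CARD('n) i j s t"
      unfolding Wn_def by (intro sum.cong refl) (auto simp: sum_distrib_left intro!: sum.cong)
    finally show ?thesis .
  qed
  finally show ?thesis .
qed



lemma beta_has_integral:
  fixes l u :: real
  assumes "l \<le> u"
  shows "((\<lambda>t. (t-l)^p * (u-t)^q) has_integral
           ((u-l)^(p+q+1) * fact p * fact q / fact (p+q+1))) {l..u}"
proof (induction q arbitrary: p)
  case 0
  have "((\<lambda>t. (t-l)^p) has_integral ((u-l)^(p+1)/(p+1) - (l-l)^(p+1)/(p+1))) {l..u}"
  proof (rule fundamental_theorem_of_calculus[OF assms])
    fix x assume "x \<in> {l..u}"
    show "((\<lambda>t. (t-l)^(p+1)/(p+1)) has_vector_derivative (x-l)^p) (at x within {l..u})"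
    proof -
      have "((\<lambda>t. (t-l)^(Suc p) / real (Suc p)) has_real_derivative (x-l)^p) (at x within {l..u})"
        by (rule derivative_eq_intros refl | simp)+
      then show ?thesis by (simp add: has_real_derivative_iff_has_vector_derivative)
    qed
  qed
  moreover have "(u-l)^(p+1)/(p+1) - (l-l)^(p+1)/(p+1) = (u-l)^(p+0+1) * fact p * fact 0 / fact (p+0+1)"
  proof -
    have "(fact (p+0+1) :: real) = (real p + 1) * fact p" by simp
    moreover have "(fact p :: real) > 0" by simp
    ultimately show ?thesis by (simp add: divide_simps)
  qed
  ultimately show ?case by simp
next
  case (Suc q)
  have eq: "(\<lambda>t. (t-l)^p * (u-t)^Suc q) = (\<lambda>t. (u-l) * ((t-l)^p * (u-t)^q) - (t-l)^(Suc p) * (u-t)^q)"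
    by (auto simp: field_simps)
  have "((\<lambda>t. (u-l) * ((t-l)^p * (u-t)^q) - (t-l)^(Suc p) * (u-t)^q) has_integral
     ((u-l) * ((u-l)^(p+q+1) * fact p * fact q / fact (p+q+1)) -
      (u-l)^(Suc p+q+1) * fact (Suc p) * fact q / fact (Suc p+q+1))) {l..u}"
    by (intro has_integral_diff has_integral_mult_right Suc)
  moreover have "(u-l) * ((u-l)^(p+q+1) * fact p * fact q / fact (p+q+1)) -
      (u-l)^(Suc p+q+1) * fact (Suc p) * fact q / fact (Suc p+q+1)
     = (u-l)^(p+Suc q+1) * fact p * fact (Suc q) / fact (p+Suc q+1)"
  proof -
    have f1: "fact (Suc p + q + 1) = (of_nat (p+q+2) :: real) * fact (p+q+1)"
      by (simp add: algebra_simps)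
    have f2: "fact (p + Suc q + 1) = (of_nat (p+q+2) :: real) * fact (p+q+1)"
      by (simp add: algebra_simps)
    have f3: "(fact (Suc p) :: real) = of_nat (Suc p) * fact p" by simp
    have f4: "(fact (Suc q) :: real) = of_nat (Suc q) * fact q" by simp
    have pos: "(fact (p+q+1) :: real) > 0" by simp
    have p1: "(u-l)^(Suc p+q+1) = (u-l) * (u-l)^(p+q+1)" "(u-l)^(p+Suc q+1) = (u-l) * (u-l)^(p+q+1)"
      by simp_all
    have gen: "X * (Y * a * b / F) - X * Y * (real (Suc p) * a) * b / (real (p+q+2) * F)
        = X * Y * a * (real (Suc q) * b) / (real (p+q+2) * F)" if "F > 0" for X Y a b F :: real
    proof -
      have N: "real (p+q+2) * F \<noteq> 0" "F \<noteq> 0" using that by simp_all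
      have "X * (Y * a * b / F) = X * Y * a * b * real (p+q+2) / (real (p+q+2) * F)"
        using N by (simp add: field_simps)
      then show ?thesis using N by (simp add: diff_divide_distrib[symmetric] algebra_simps)
    qed
    show ?thesis unfolding f1 f2 f3 f4 p1 by (rule gen[OF pos])
  qed
  ultimately show ?case unfolding eq by simp
qed




lemma cnt_set_eq:
  "{x::real^'n. k \<le> cnt x a} = (\<Union>S\<in>{S. card S = k}. {x. \<forall>m\<in>S. x$m \<le> a})"
proof (intro set_eqI iffI)
  fix x :: "real^'n" assume "x \<in> {x. k \<le> cnt x a}"
  then have "k \<le> card {m. x$m \<le> a}" by (simp add: cnt_def)
  then obtain S where "S \<subseteq> {m. x$m \<le> a}" "card S = k" by (rule obtain_subset_with_card_n)
  then show "x \<in> (\<Union>S\<in>{S. card S = k}. {x. \<forall>m\<in>S. x$m \<le> a})" by auto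
next
  fix x :: "real^'n" assume "x \<in> (\<Union>S\<in>{S. card S = k}. {x. \<forall>m\<in>S. x$m \<le> a})"
  then obtain S where "card S = k" "\<forall>m\<in>S. x$m \<le> a" by auto
  then have "k \<le> card {m. x$m \<le> a}" by (metis card_mono finite mem_Collect_eq subsetI)
  then show "x \<in> {x. k \<le> cnt x a}" by (simp add: cnt_def)
qed

lemma os_borel[measurable]: "os k \<in> borel_measurable (borel :: (real^'n) measure)"
proof (cases "k = 0 \<or> k > CARD('n)")
  case True
  then have "os k = (\<lambda>x::real^'n. if k = 0 then 0 else 1)" by (auto simp: os_def fun_eq_iff)
  then show ?thesis by simp
next
  case False
  then have k: "1 \<le> k" "k \<le> CARD('n)" by auto
  show ?thesis unfolding borel_measurable_iff_le
  proof
    fix a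
    have "{w \<in> space (borel :: (real^'n) measure). os k w \<le> a} = {x::real^'n. k \<le> cnt x a}"
      using os_le_iff[OF k] by auto
    also have "\<dots> = (\<Union>S\<in>{S. card S = k}. {x. \<forall>m\<in>S. x$m \<le> a})" by (rule cnt_set_eq)
    also have "closed \<dots>"
    proof (intro closed_UN ballI)
      fix S :: "'n set"
      have eq: "{x::real^'n. \<forall>m\<in>S. x$m \<le> a} = (\<Inter>m\<in>S. {x. x$m \<le> a})" by auto
      show "closed {x::real^'n. \<forall>m\<in>S. x$m \<le> a}"
        unfolding eq by (intro closed_INT ballI closed_halfspace_component_le_cart)
    qed simp
    finally show "{w \<in> space (borel :: (real^'n) measure). os k w \<le> a} \<in> sets borel" by (rule borel_closed)
  qed
qed

lemma unit_cube_cbox: "unit_cube = cbox (0::real^'n) 1"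
  by (auto simp: unit_cube_def mem_box_cart)




lemma unit_cube_borel[measurable]: "(unit_cube :: (real^'n) set) \<in> sets borel"
  unfolding unit_cube_cbox by simp

lemma os_borel_lborel[measurable]: "os k \<in> borel_measurable (lborel :: (real^'n) measure)"
  by simp

lemma Wn_nonneg: "0 \<le> s \<Longrightarrow> s \<le> t \<Longrightarrow> t \<le> 1 \<Longrightarrow> 0 \<le> Wn n i j s t"
  unfolding Wn_def by (intro sum_nonneg) auto

lemma gram_nn:
  fixes i j :: nat
  assumes ij: "i \<le> CARD('n)+1" "j \<le> CARD('n)+1"
  shows "(\<integral>\<^sup>+x. indicator unit_cube x * ennreal (os i x * os j x) \<partial>(lborel::(real^'n) measure))
    = (\<integral>\<^sup>+s. \<integral>\<^sup>+t. indicator {0..<1} s * indicator {0..<1} t *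
         ennreal (if s \<le> t then Wn CARD('n) i j s t else Wn CARD('n) j i t s) \<partial>lborel \<partial>lborel)"
proof -
  define F :: "real^'n \<Rightarrow> real \<times> real \<Rightarrow> ennreal" where
    "F x p = (if x \<in> unit_cube \<and> 0 \<le> fst p \<and> fst p < os i x \<and> 0 \<le> snd p \<and> snd p < os j x then 1 else 0)"
    for x p
  have Fmeas: "(\<lambda>(x, p). F x p) \<in> borel_measurable (lborel \<Otimes>\<^sub>M (lborel \<Otimes>\<^sub>M lborel))"
    unfolding F_def by measurable
  have step1: "indicator unit_cube x * ennreal (os i x * os j x) = (\<integral>\<^sup>+p. F x p \<partial>(lborel \<Otimes>\<^sub>M lborel))"
    for x :: "real^'n"
  proof (cases "x \<in> unit_cube")
    case False then show ?thesis by (simp add: F_def)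
  next
    case True
    have r: "0 \<le> os i x" "0 \<le> os j x" using os_range[OF True] by auto
    have "(\<integral>\<^sup>+p. F x p \<partial>(lborel \<Otimes>\<^sub>M lborel)) = (\<integral>\<^sup>+s. \<integral>\<^sup>+t. F x (s,t) \<partial>lborel \<partial>lborel)"
      by (rule lborel.nn_integral_fst[symmetric]) (unfold F_def, measurable)
    also have "\<dots> = (\<integral>\<^sup>+s. indicator {0..<os i x} s * emeasure lborel {0..<os j x} \<partial>lborel)"
    proof -
      have "F x (s,t) = indicator {0..<os i x} s * indicator {0..<os j x} t" for s t
        using True by (auto simp: F_def indicator_def)
      then show ?thesis by (simp add: nn_integral_cmult_indicator)
    qed
    also have "\<dots> = emeasure lborel {0..<os i x} * emeasure lborel {0..<os j x}"
      by (simp add: nn_integral_multc)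
    also have "\<dots> = ennreal (os i x * os j x)"
      using r by (simp add: emeasure_lborel_Ico ennreal_mult)
    finally show ?thesis using True by simp
  qed
  have "(\<integral>\<^sup>+x. indicator unit_cube x * ennreal (os i x * os j x) \<partial>(lborel::(real^'n) measure))
     = (\<integral>\<^sup>+x. \<integral>\<^sup>+p. F x p \<partial>(lborel \<Otimes>\<^sub>M lborel) \<partial>lborel)"
    by (simp add: step1)
  also have "\<dots> = (\<integral>\<^sup>+p. \<integral>\<^sup>+x. F x p \<partial>lborel \<partial>(lborel \<Otimes>\<^sub>M lborel))"
    by (rule pair_sigma_finite.Fubini'[symmetric, OF _ Fmeas])
       (intro pair_sigma_finite.intro sigma_finite_lborel lborel_pair.P.sigma_finite_measure_axioms)
  also have "\<dots> = (\<integral>\<^sup>+p. indicator ({0..<1} \<times> {0..<1}) p *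
         ennreal (if fst p \<le> snd p then Wn CARD('n) i j (fst p) (snd p) else Wn CARD('n) j i (snd p) (fst p))
         \<partial>(lborel \<Otimes>\<^sub>M lborel))"
  proof (intro nn_integral_cong)
    fix p :: "real \<times> real"
    obtain s t where p: "p = (s,t)" by (cases p)
    show "(\<integral>\<^sup>+x. F x p \<partial>lborel) = indicator ({0..<1} \<times> {0..<1}) p *
         ennreal (if fst p \<le> snd p then Wn CARD('n) i j (fst p) (snd p) else Wn CARD('n) j i (snd p) (fst p))"
    proof (cases "0 \<le> s \<and> s < 1 \<and> 0 \<le> t \<and> t < 1")
      case False
      have "F x p = 0" for x
      proof (cases "x \<in> unit_cube")
        case True
        then show ?thesis using os_range[OF True, of i] os_range[OF True, of j] False
          by (auto simp: F_def p)
      qed (simp add: F_def)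
      then show ?thesis using False by (simp add: p)
    next
      case True
      have "F x p = indicator {x::real^'n. x \<in> unit_cube \<and> cnt x s < i \<and> cnt x t < j} x" for x
        using True os_less_iff[OF ij(1), of s x] os_less_iff[OF ij(2), of t x]
        by (auto simp: F_def p indicator_def)
      then have "(\<integral>\<^sup>+x. F x p \<partial>lborel) =
          (\<integral>\<^sup>+x. indicator {x::real^'n. x \<in> unit_cube \<and> cnt x s < i \<and> cnt x t < j} x \<partial>lborel)"
        by simp
      also have "\<dots> = ennreal (if s \<le> t then Wn CARD('n) i j s t else Wn CARD('n) j i t s)"
      proof (cases "s \<le> t")
        case True
        then show ?thesis using pattern_measure[of s t i j] \<open>0 \<le> s \<and> s < 1 \<and> 0 \<le> t \<and> t < 1\<close>
          by simp
      next
        case False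
        have "{x::real^'n. x \<in> unit_cube \<and> cnt x s < i \<and> cnt x t < j} =
              {x::real^'n. x \<in> unit_cube \<and> cnt x t < j \<and> cnt x s < i}" by auto
        then show ?thesis using pattern_measure[of t s j i] \<open>0 \<le> s \<and> s < 1 \<and> 0 \<le> t \<and> t < 1\<close> False
          by simp
      qed
      finally show ?thesis using True by (simp add: p)
    qed
  qed
  also have "\<dots> = (\<integral>\<^sup>+s. \<integral>\<^sup>+t. indicator {0..<1} s * indicator {0..<1} t *
         ennreal (if s \<le> t then Wn CARD('n) i j s t else Wn CARD('n) j i t s) \<partial>lborel \<partial>lborel)"
  proof -
    have "(\<integral>\<^sup>+p. indicator ({0..<1} \<times> {0..<1}) p *
         ennreal (if fst p \<le> snd p then Wn CARD('n) i j (fst p) (snd p) else Wn CARD('n) j i (snd p) (fst p))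
         \<partial>(lborel \<Otimes>\<^sub>M lborel)) = (\<integral>\<^sup>+s. \<integral>\<^sup>+t. (\<lambda>p. indicator ({0..<1} \<times> {0..<1}) p *
         ennreal (if fst p \<le> snd p then Wn CARD('n) i j (fst p) (snd p) else Wn CARD('n) j i (snd p) (fst p))) (s,t)
          \<partial>lborel \<partial>lborel)"
      by (rule lborel.nn_integral_fst[symmetric]) (unfold Wn_def, measurable)
    then show ?thesis by (simp only: indicator_times fst_conv snd_conv)
  qed
  finally show ?thesis .
qed


definition V1 :: "nat \<Rightarrow> nat \<Rightarrow> nat \<Rightarrow> real \<Rightarrow> real" where
  "V1 n i j s = (\<Sum>b\<le>n. \<Sum>a\<le>b. if a < i \<and> b < j then
     real (n choose b) * real (b choose a) * s^a *
       ((1-s)^((b-a)+(n-b)+1) * fact (b-a) * fact (n-b) / fact ((b-a)+(n-b)+1)) else 0)"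

definition V2 :: "nat \<Rightarrow> nat \<Rightarrow> nat \<Rightarrow> real \<Rightarrow> real" where
  "V2 n i j s = (\<Sum>b\<le>n. \<Sum>a\<le>b. if a < i \<and> b < j then
     real (n choose b) * real (b choose a) * (1-s)^(n-b) *
       ((s-0)^(a+(b-a)+1) * fact a * fact (b-a) / fact (a+(b-a)+1)) else 0)"

lemma inner1:
  assumes "s \<le> 1"
  shows "((\<lambda>t. Wn n i j s t) has_integral V1 n i j s) {s..1}"
  unfolding Wn_def V1_def
proof (intro has_integral_sum finite_atMost)
  fix b a
  show "((\<lambda>t. if a < i \<and> b < j then real (n choose b) * real (b choose a) *
             (s ^ a * (t - s) ^ (b - a) * (1 - t) ^ (n - b)) else 0) has_integral
        (if a < i \<and> b < j then real (n choose b) * real (b choose a) * s ^ a *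
             ((1 - s) ^ (b - a + (n - b) + 1) * fact (b - a) * fact (n - b) / fact (b - a + (n - b) + 1))
         else 0)) {s..1}"
  proof (cases "a < i \<and> b < j")
    case True
    have h: "((\<lambda>t. (real (n choose b) * real (b choose a) * s ^ a) * ((t-s)^(b-a) * (1-t)^(n-b))) has_integral
      (real (n choose b) * real (b choose a) * s ^ a) *
        ((1 - s) ^ (b - a + (n - b) + 1) * fact (b - a) * fact (n - b) / fact (b - a + (n - b) + 1))) {s..1}"
      by (intro has_integral_mult_right beta_has_integral assms)
    show ?thesis using True h by (simp add: mult_ac)
  next
    case False
    show ?thesis unfolding if_not_P[OF False] by simp
  qed
qed

lemma inner2:
  assumes "0 \<le> s"
  shows "((\<lambda>t. Wn n i j t s) has_integral V2 n i j s) {0..s}"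
  unfolding Wn_def V2_def
proof (intro has_integral_sum finite_atMost)
  fix b a
  show "((\<lambda>t. if a < i \<and> b < j then real (n choose b) * real (b choose a) *
             (t ^ a * (s - t) ^ (b - a) * (1 - s) ^ (n - b)) else 0) has_integral
        (if a < i \<and> b < j then real (n choose b) * real (b choose a) * (1-s)^(n-b) *
       ((s-0)^(a+(b-a)+1) * fact a * fact (b-a) / fact (a+(b-a)+1)) else 0)) {0..s}"
  proof (cases "a < i \<and> b < j")
    case True
    have h: "((\<lambda>t. (real (n choose b) * real (b choose a) * (1-s)^(n-b)) * ((t-0)^a * (s-t)^(b-a))) has_integral
      (real (n choose b) * real (b choose a) * (1-s)^(n-b)) *
        ((s-0)^(a+(b-a)+1) * fact a * fact (b-a) / fact (a+(b-a)+1))) {0..s}"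
      by (intro has_integral_mult_right beta_has_integral assms)
    show ?thesis using True h by (simp add: mult_ac)
  next
    case False
    show ?thesis unfolding if_not_P[OF False] by simp
  qed
qed




lemma fact_prod:
  assumes "a \<le> b" "b \<le> n"
  shows "real (n choose b) * real (b choose a) * fact a * fact (b-a) * fact (n-b) = fact n"
proof -
  have 1: "fact b * fact (n-b) * (n choose b) = fact n" using binomial_fact_lemma[OF assms(2)] .
  have 2: "fact a * fact (b-a) * (b choose a) = fact b" using binomial_fact_lemma[OF assms(1)] .
  have "real (n choose b) * real (b choose a) * fact a * fact (b-a) * fact (n-b)
      = real (fact a * fact (b-a) * (b choose a) * fact (n-b) * (n choose b))"
    by (simp add: of_nat_mult algebra_simps)
  also have "\<dots> = real (fact n)" using 1 2 by simp
  finally show ?thesis by simp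
qed

definition cntW :: "nat \<Rightarrow> nat \<Rightarrow> nat \<Rightarrow> real" where
  "cntW n i j = (\<Sum>b\<le>n. \<Sum>a\<le>b. if a < i \<and> b < j then 1 else 0)"

lemma outer1: "(V1 n i j has_integral (cntW n i j * (fact n / fact (n+2)))) {0..1}"
proof -
  have "((\<lambda>s. V1 n i j s) has_integral (\<Sum>b\<le>n. \<Sum>a\<le>b. if a < i \<and> b < j then fact n / fact (n+2) else 0)) {0..1}"
    unfolding V1_def
  proof (intro has_integral_sum finite_atMost)
    fix b a assume ab: "b \<in> {..n}" "a \<in> {..b}"
    show "((\<lambda>s. if a < i \<and> b < j then
     real (n choose b) * real (b choose a) * s^a *
       ((1-s)^((b-a)+(n-b)+1) * fact (b-a) * fact (n-b) / fact ((b-a)+(n-b)+1)) else 0) has_integral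
       (if a < i \<and> b < j then fact n / fact (n+2) else 0)) {0..1}"
    proof (cases "a < i \<and> b < j")
      case True
      define Q where "Q = (b-a)+(n-b)+1"
      have Q: "a + Q + 1 = n + 2" using ab by (auto simp: Q_def)
      have h: "((\<lambda>s. (real (n choose b) * real (b choose a) * fact (b-a) * fact (n-b) / fact Q) * ((s-0)^a * (1-s)^Q)) has_integral
        (real (n choose b) * real (b choose a) * fact (b-a) * fact (n-b) / fact Q) *
          ((1-0)^(a+Q+1) * fact a * fact Q / fact (a+Q+1))) {0..1}"
        by (intro has_integral_mult_right beta_has_integral) simp
      have "(real (n choose b) * real (b choose a) * fact (b-a) * fact (n-b) / fact Q) *
          ((1-0)^(a+Q+1) * fact a * fact Q / fact (a+Q+1)) = fact n / fact (n+2)"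
        using fact_prod[of a b n] ab unfolding Q by (simp add: field_simps)
      then show ?thesis using True h unfolding Q_def[symmetric] by (simp add: mult_ac)
    next
      case False
      show ?thesis unfolding if_not_P[OF False] by simp
    qed
  qed
  moreover have "(\<Sum>b\<le>n. \<Sum>a\<le>b. if a < i \<and> b < j then fact n / fact (n+2) else 0) = cntW n i j * (fact n / fact (n+2) :: real)"
    unfolding cntW_def sum_distrib_right by (intro sum.cong refl) simp
  ultimately show ?thesis by simp
qed

lemma outer2: "(V2 n i j has_integral (cntW n i j * (fact n / fact (n+2)))) {0..1}"
proof -
  have "((\<lambda>s. V2 n i j s) has_integral (\<Sum>b\<le>n. \<Sum>a\<le>b. if a < i \<and> b < j then fact n / fact (n+2) else 0)) {0..1}"
    unfolding V2_def
  proof (intro has_integral_sum finite_atMost)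
    fix b a assume ab: "b \<in> {..n}" "a \<in> {..b}"
    show "((\<lambda>s. if a < i \<and> b < j then
     real (n choose b) * real (b choose a) * (1-s)^(n-b) *
       ((s-0)^(a+(b-a)+1) * fact a * fact (b-a) / fact (a+(b-a)+1)) else 0) has_integral
       (if a < i \<and> b < j then fact n / fact (n+2) else 0)) {0..1}"
    proof (cases "a < i \<and> b < j")
      case True
      define R where "R = a+(b-a)+1"
      have R: "R + (n-b) + 1 = n + 2" using ab by (auto simp: R_def)
      have h: "((\<lambda>s. (real (n choose b) * real (b choose a) * fact a * fact (b-a) / fact R) * ((s-0)^R * (1-s)^(n-b))) has_integral
        (real (n choose b) * real (b choose a) * fact a * fact (b-a) / fact R) *
          ((1-0)^(R+(n-b)+1) * fact R * fact (n-b) / fact (R+(n-b)+1))) {0..1}"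
        by (intro has_integral_mult_right beta_has_integral) simp
      have "(real (n choose b) * real (b choose a) * fact a * fact (b-a) / fact R) *
          ((1-0)^(R+(n-b)+1) * fact R * fact (n-b) / fact (R+(n-b)+1)) = fact n / fact (n+2)"
        using fact_prod[of a b n] ab unfolding R by (simp add: field_simps)
      then show ?thesis using True h unfolding R_def[symmetric] by (simp add: mult_ac)
    next
      case False
      show ?thesis unfolding if_not_P[OF False] by simp
    qed
  qed
  moreover have "(\<Sum>b\<le>n. \<Sum>a\<le>b. if a < i \<and> b < j then fact n / fact (n+2) else 0) = cntW n i j * (fact n / fact (n+2) :: real)"
    unfolding cntW_def sum_distrib_right by (intro sum.cong refl) simp
  ultimately show ?thesis by simp
qed



definition cn :: "nat \<Rightarrow> nat \<Rightarrow> nat" where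
  "cn i j = (\<Sum>b<j. min (b+1) i)"

lemma cn_closed: "2 * int (cn i j) = (if j \<le> i then int j*(int j+1) else 2*int i*int j + int i - int i*int i)"
proof (induction j)
  case 0 then show ?case by (simp add: cn_def)
next
  case (Suc j)
  have "2 * int (cn i (Suc j)) = 2 * int (cn i j) + 2 * int (min (j+1) i)" by (simp add: cn_def)
  also have "\<dots> = (if Suc j \<le> i then int (Suc j)*(int (Suc j)+1) else 2*int i*int (Suc j) + int i - int i*int i)"
    using Suc by (cases "j < i"; cases "j = i") (auto simp: algebra_simps min_def)
  finally show ?case .
qed

lemma cn_sym: "cn i j + cn j i = min i j * (max i j + 1)"
proof -
  have "2 * (int (cn i j) + int (cn j i)) = 2 * (int (min i j) * (int (max i j) + 1))"
    using cn_closed[of i j] cn_closed[of j i]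
    by (cases "i \<le> j") (auto simp: algebra_simps min_def max_def)
  then have "int (cn i j) + int (cn j i) = int (min i j) * (int (max i j) + 1)"
    by (metis mult_left_cancel zero_neq_numeral)
  then show ?thesis by (metis of_nat_add of_nat_mult of_nat_1 of_nat_eq_iff)
qed

lemma inner_count: "(\<Sum>a\<le>b. if a < i then (1::real) else 0) = real (min (b+1) i)"
proof -
  have "(\<Sum>a\<le>b. if a < i then (1::real) else 0) = real (card {a. a \<le> b \<and> a < i})"
    by (simp add: sum.If_cases Int_def atMost_def)
  also have "{a. a \<le> b \<and> a < i} = {..<min (b+1) i}" by auto
  finally show ?thesis by simp
qed

lemma cntW_eq:
  assumes "j \<le> n+1"
  shows "cntW n i j = real (cn i j)"
proof -
  have "cntW n i j = (\<Sum>b\<le>n. if b < j then (\<Sum>a\<le>b. if a < i then (1::real) else 0) else 0)"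
    unfolding cntW_def by (intro sum.cong refl) auto
  also have "\<dots> = (\<Sum>b\<le>n. if b < j then real (min (b+1) i) else 0)"
    unfolding inner_count ..
  also have "\<dots> = (\<Sum>b\<in>{..n} \<inter> {b. b < j}. real (min (b+1) i))"
    by (simp add: sum.If_cases)
  also have "{..n} \<inter> {b. b < j} = {..<j}" using assms by auto
  finally show ?thesis by (simp add: cn_def)
qed

lemma cntW_sym:
  assumes "i \<le> n+1" "j \<le> n+1"
  shows "cntW n i j + cntW n j i = real (min i j * (max i j + 1))"
  using cntW_eq[OF assms(2), of i] cntW_eq[OF assms(1), of j] cn_sym[of i j]
  by (metis of_nat_add)




lemma nn_from_has_integral:
  fixes f :: "real \<Rightarrow> real"
  assumes "(f has_integral I) {l..u}" "\<And>t. t\<in>{l..u} \<Longrightarrow> 0 \<le> f t" "{l<..<u} \<subseteq> S" "S \<subseteq> {l..u}"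
  shows "(\<integral>\<^sup>+t. ennreal (indicator S t * f t) \<partial>lborel) = ennreal I"
proof -
  have "(\<integral>\<^sup>+t. ennreal (indicator S t * f t) \<partial>lborel) = (\<integral>\<^sup>+t. ennreal (indicator {l..u} t * f t) \<partial>lborel)"
  proof (rule nn_integral_cong_AE)
    have "AE t in lborel. t \<noteq> l" "AE t in lborel. t \<noteq> u" by (rule AE_lborel_singleton)+
    then show "AE t in lborel. ennreal (indicator S t * f t) = ennreal (indicator {l..u} t * f t)"
    proof eventually_elim
      case (elim t)
      then have "t \<in> S \<longleftrightarrow> t \<in> {l..u}" using assms(3,4) by auto
      then show ?case by (simp add: indicator_def)
    qed
  qed
  also have "\<dots> = ennreal I" by (rule nn_integral_has_integral_lebesgue[OF assms(2) assms(1)])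
  finally show ?thesis .
qed

lemma V1_nonneg: "0 \<le> s \<Longrightarrow> s \<le> 1 \<Longrightarrow> 0 \<le> V1 n i j s"
  unfolding V1_def by (intro sum_nonneg) auto

lemma V2_nonneg: "0 \<le> s \<Longrightarrow> s \<le> 1 \<Longrightarrow> 0 \<le> V2 n i j s"
  unfolding V2_def by (intro sum_nonneg) auto

lemma iter_integral:
  "(\<integral>\<^sup>+s. \<integral>\<^sup>+t. indicator {0..<1} s * indicator {0..<1} t *
         ennreal (if s \<le> t then Wn n i j s t else Wn n j i t s) \<partial>lborel \<partial>lborel)
   = ennreal ((cntW n i j + cntW n j i) * (fact n / fact (n+2)))"
proof -
  have inner: "(\<integral>\<^sup>+t. indicator {0..<1} s * indicator {0..<1} t *
         ennreal (if s \<le> t then Wn n i j s t else Wn n j i t s) \<partial>lborel)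
       = ennreal (indicator {0..<1} s * (V1 n i j s + V2 n j i s))" for s :: real
  proof (cases "0 \<le> s \<and> s < 1")
    case False
    then have "indicator {0..<1} s = (0::ennreal)" "indicator {0..<1} s = (0::real)"
      by (auto simp: indicator_def)
    then show ?thesis by simp
  next
    case True
    have pt: "indicator {0..<1} s * indicator {0..<1} t *
         ennreal (if s \<le> t then Wn n i j s t else Wn n j i t s)
        = ennreal (indicator {s..<1} t * Wn n i j s t) + ennreal (indicator {0..<s} t * Wn n j i t s)" for t
      using True by (auto simp: indicator_def)
    have "(\<integral>\<^sup>+t. indicator {0..<1} s * indicator {0..<1} t *
         ennreal (if s \<le> t then Wn n i j s t else Wn n j i t s) \<partial>lborel)
      = (\<integral>\<^sup>+t. ennreal (indicator {s..<1} t * Wn n i j s t) \<partial>lborel) +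
        (\<integral>\<^sup>+t. ennreal (indicator {0..<s} t * Wn n j i t s) \<partial>lborel)"
      unfolding pt by (rule nn_integral_add) (unfold Wn_def, measurable)
    also have "(\<integral>\<^sup>+t. ennreal (indicator {s..<1} t * Wn n i j s t) \<partial>lborel) = ennreal (V1 n i j s)"
      using True by (intro nn_from_has_integral inner1 Wn_nonneg) (auto intro!: inner1)
    also have "(\<integral>\<^sup>+t. ennreal (indicator {0..<s} t * Wn n j i t s) \<partial>lborel) = ennreal (V2 n j i s)"
      using True by (intro nn_from_has_integral inner2 Wn_nonneg) (auto intro!: inner2)
    finally show ?thesis using True V1_nonneg[of s n i j] V2_nonneg[of s n j i]
      by (simp add: ennreal_plus)
  qed
  have "(\<integral>\<^sup>+s. \<integral>\<^sup>+t. indicator {0..<1} s * indicator {0..<1} t *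
         ennreal (if s \<le> t then Wn n i j s t else Wn n j i t s) \<partial>lborel \<partial>lborel)
     = (\<integral>\<^sup>+s. ennreal (indicator {0..<1} s * (V1 n i j s + V2 n j i s)) \<partial>lborel)"
    by (simp add: inner)
  also have "\<dots> = ennreal (cntW n i j * (fact n / fact (n+2)) + cntW n j i * (fact n / fact (n+2)))"
    by (rule nn_from_has_integral[OF has_integral_add[OF outer1 outer2]])
       (auto intro!: add_nonneg_nonneg V1_nonneg V2_nonneg)
  finally show ?thesis by (simp only: distrib_right)
qed




lemma os_meas[measurable]: "os k \<in> borel_measurable (lebesgue_on (unit_cube :: (real^'n) set))"
  by (intro measurable_restrict_space1 measurable_completion os_borel_lborel)

lemma unit_cube_lebesgue: "(unit_cube :: (real^'n) set) \<in> sets lebesgue"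
  using unit_cube_borel by (metis sets_completionI_sets sets_lborel)

lemma gram:
  fixes i j :: nat
  assumes ij: "i \<le> CARD('n)+1" "j \<le> CARD('n)+1"
  shows "L2_inner (os i :: real^'n \<Rightarrow> real) (os j) =
     real (min i j * (max i j + 1)) / ((real CARD('n) + 1) * (real CARD('n) + 2))"
proof -
  let ?M = "lebesgue_on (unit_cube :: (real^'n) set)"
  have "L2_inner (os i :: real^'n \<Rightarrow> real) (os j) = enn2real (\<integral>\<^sup>+x. ennreal (os i x * os j x) \<partial>?M)"
    unfolding L2_inner_def
    by (rule integral_eq_nn_integral) (auto simp: os_range space_restrict_space intro!: AE_I2 mult_nonneg_nonneg)
  also have "(\<integral>\<^sup>+x. ennreal (os i x * os j x) \<partial>?M) =
     (\<integral>\<^sup>+x. ennreal (os i x * os j x) * indicator unit_cube (x::real^'n) \<partial>lebesgue)"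
    by (subst nn_integral_restrict_space) (auto simp: unit_cube_lebesgue)
  also have "\<dots> = (\<integral>\<^sup>+x. indicator unit_cube x * ennreal (os i x * os j x) \<partial>(lborel :: (real^'n) measure))"
    by (simp add: nn_integral_completion mult.commute)
  also have "\<dots> = ennreal ((cntW CARD('n) i j + cntW CARD('n) j i) * (fact CARD('n) / fact (CARD('n)+2)))"
    using gram_nn[OF ij] iter_integral by simp
  finally have "L2_inner (os i :: real^'n \<Rightarrow> real) (os j) =
      (cntW CARD('n) i j + cntW CARD('n) j i) * (fact CARD('n) / fact (CARD('n)+2))"
    by (simp add: cntW_def sum_nonneg)
  also have "\<dots> = real (min i j * (max i j + 1)) * (fact CARD('n) / fact (CARD('n)+2))"
    using cntW_sym[OF ij] by simp
  also have "(fact CARD('n) / fact (CARD('n)+2) :: real) = 1 / ((real CARD('n) + 1) * (real CARD('n) + 2))"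
  proof -
    have e: "(fact (CARD('n)+2) :: real) = ((real CARD('n) + 1) * (real CARD('n) + 2)) * fact CARD('n)"
      by (simp add: algebra_simps)
    have "(fact CARD('n) :: real) \<noteq> 0" by simp
    then show ?thesis unfolding e by simp
  qed
  finally show ?thesis by simp
qed



definition Kf :: "nat \<Rightarrow> nat \<Rightarrow> real" where
  "Kf j k = real (min j k * (max j k + 1))"

definition Cm :: "nat \<Rightarrow> nat \<Rightarrow> nat \<Rightarrow> real" where
  "Cm n j m = (if j \<le> n then - ((real n+1)*(real n+2)) *
      ((if m = j+1 then 1 else 0) - 2 * (if m = j then 1 else 0) + (if m+1 = j then 1 else 0))
    else (real n+1)^2 * (if m = n+1 then 1 else 0) - (real n+1)*(real n+2) * (if m = n then 1 else 0))"

lemma Kf0[simp]: "Kf 0 k = 0" by (simp add: Kf_def)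

lemma sd: "1 \<le> k \<Longrightarrow> Kf m k - 2*Kf (m+1) k + Kf (m+2) k = - (if m+1 = k then 1 else 0)"
  unfolding Kf_def
  by (cases "m+2 \<le> k"; cases "m+1 = k") (auto simp: min_def max_def algebra_simps)

lemma sum_d1: "1 \<le> m \<Longrightarrow> m \<le> n+1 \<Longrightarrow> (\<Sum>j=1..n. (if m = j+1 then 1 else 0) * Kf j k) = Kf (m-1) k"
proof -
  assume m: "1 \<le> m" "m \<le> n+1"
  have "(\<Sum>j=1..n. (if m = j+1 then 1 else 0) * Kf j k) = (\<Sum>j=1..n. if j = m-1 then Kf j k else 0)"
    using m by (intro sum.cong) auto
  also have "\<dots> = (if m-1 \<in> {1..n} then Kf (m-1) k else 0)" by (simp add: sum.delta')
  also have "\<dots> = Kf (m-1) k" using m by auto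
  finally show ?thesis .
qed

lemma sum_d2: "(\<Sum>j=1..n. (if m = j then 1 else 0) * Kf j k) = (if m \<in> {1..n} then Kf m k else 0)"
proof -
  have "(\<Sum>j=1..n. (if m = j then 1 else 0) * Kf j k) = (\<Sum>j=1..n. if j = m then Kf j k else 0)"
    by (intro sum.cong) auto
  then show ?thesis by (simp add: sum.delta')
qed

lemma sum_d3: "(\<Sum>j=1..n. (if m+1 = j then 1 else 0) * Kf j k) = (if m+1 \<le> n then Kf (m+1) k else 0)"
proof -
  have "(\<Sum>j=1..n. (if m+1 = j then 1 else 0) * Kf j k) = (\<Sum>j=1..n. if j = m+1 then Kf j k else 0)"
    by (intro sum.cong) auto
  then show ?thesis by (simp add: sum.delta')
qed

lemma Cm_K:
  assumes m: "1 \<le> m" "m \<le> n+1" and k: "1 \<le> k" "k \<le> n+1"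
  shows "(\<Sum>j=1..n+1. Cm n j m * Kf j k) = (real n+1)*(real n+2)*(if m = k then 1 else 0)"
proof -
  let ?c = "(real n+1)*(real n+2)"
  have "(\<Sum>j=1..n+1. Cm n j m * Kf j k) = (\<Sum>j=1..n. Cm n j m * Kf j k) + Cm n (n+1) m * Kf (n+1) k"
    by simp
  also have "(\<Sum>j=1..n. Cm n j m * Kf j k) = - ?c * ((\<Sum>j=1..n. (if m = j+1 then 1 else 0) * Kf j k)
      - 2 * (\<Sum>j=1..n. (if m = j then 1 else 0) * Kf j k) + (\<Sum>j=1..n. (if m+1 = j then 1 else 0) * Kf j k))"
  proof -
    have "(\<Sum>j=1..n. Cm n j m * Kf j k) = (\<Sum>j=1..n. - ?c * ((if m = j+1 then 1 else 0) * Kf j k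
      - 2 * ((if m = j then 1 else 0) * Kf j k) + (if m+1 = j then 1 else 0) * Kf j k))"
      by (intro sum.cong refl) (simp add: Cm_def ring_distribs mult.assoc)
    also have "\<dots> = - ?c * ((\<Sum>j=1..n. (if m = j+1 then 1 else 0) * Kf j k)
      - 2 * (\<Sum>j=1..n. (if m = j then 1 else 0) * Kf j k) + (\<Sum>j=1..n. (if m+1 = j then 1 else 0) * Kf j k))"
      by (simp only: sum_distrib_left[symmetric] sum.distrib sum_subtractf)
    finally show ?thesis .
  qed
  also have "\<dots> = - ?c * (Kf (m-1) k - 2 * (if m \<in> {1..n} then Kf m k else 0) + (if m+1 \<le> n then Kf (m+1) k else 0))"
    unfolding sum_d1[OF m] sum_d2 sum_d3 by simp
  finally have S: "(\<Sum>j=1..n+1. Cm n j m * Kf j k) = - ?c * (Kf (m-1) k - 2 * (if m \<in> {1..n} then Kf m k else 0)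
      + (if m+1 \<le> n then Kf (m+1) k else 0)) + Cm n (n+1) m * Kf (n+1) k" .
  consider "m+1 \<le> n" | "m = n" | "m = n+1" using m by linarith
  then show ?thesis
  proof cases
    case 1
    have C0: "Cm n (n+1) m = 0" using 1 by (simp add: Cm_def)
    have A: "(if m \<in> {1..n} then Kf m k else 0) = Kf m k" "(if m+1 \<le> n then Kf (m+1) k else 0) = Kf (m+1) k"
      using 1 m by auto
    have D: "Kf (m-1) k - 2 * Kf m k + Kf (m+1) k = -(if m = k then 1 else 0)"
      using sd[OF k(1), of "m-1"] m by simp
    have "(\<Sum>j=1..n+1. Cm n j m * Kf j k) = - ?c * (Kf (m-1) k - 2 * Kf m k + Kf (m+1) k)"
      using S unfolding A C0 by simp
    then show ?thesis unfolding D by simp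
  next
    case 2
    have C0: "Cm n (n+1) m = - ?c" using 2 by (simp add: Cm_def)
    have A: "(if m \<in> {1..n} then Kf m k else 0) = Kf m k" "(if m+1 \<le> n then Kf (m+1) k else 0) = 0"
      using 2 m by auto
    have D: "Kf (m-1) k - 2 * Kf m k + Kf (m+1) k = -(if m = k then 1 else 0)"
      using sd[OF k(1), of "m-1"] m by simp
    have Kn: "Kf (n+1) k = Kf (m+1) k" using 2 by simp
    have "(\<Sum>j=1..n+1. Cm n j m * Kf j k) = - ?c * (Kf (m-1) k - 2 * Kf m k + 0) + (- ?c) * Kf (m+1) k"
      using S unfolding A C0 Kn by (simp only:)
    also have "\<dots> = - ?c * (Kf (m-1) k - 2 * Kf m k + Kf (m+1) k)" by (simp add: algebra_simps)
    finally have "(\<Sum>j=1..n+1. Cm n j m * Kf j k) = - ?c * (Kf (m-1) k - 2 * Kf m k + Kf (m+1) k)" .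
    then show ?thesis unfolding D by simp
  next
    case 3
    have C0: "Cm n (n+1) m = (real n+1)^2" using 3 by (simp add: Cm_def)
    have A: "(if m \<in> {1..n} then Kf m k else 0) = 0" "(if m+1 \<le> n then Kf (m+1) k else 0) = 0"
      using 3 m by auto
    have E: "- ?c * Kf n k + (real n+1)^2 * Kf (n+1) k = ?c * (if n+1 = k then 1 else 0)"
      using k unfolding Kf_def
      by (cases "k = n+1"; cases "k = n") (auto simp: min_def max_def algebra_simps power2_eq_square)
    have m1: "m - 1 = n" using 3 by simp
    have "(\<Sum>j=1..n+1. Cm n j m * Kf j k) = - ?c * (Kf n k - 2 * 0 + 0) + (real n+1)^2 * Kf (n+1) k"
      using S unfolding A C0 m1 by (simp only:)
    then have "(\<Sum>j=1..n+1. Cm n j m * Kf j k) = - ?c * Kf n k + (real n+1)^2 * Kf (n+1) k"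
      by simp
    then show ?thesis unfolding E 3 by simp
  qed
qed




abbreviation MM :: "(real^'n) measure" where "MM \<equiv> lebesgue_on unit_cube"

lemma fin_MM: "finite_measure (MM :: (real^'n) measure)"
  by (rule finite_measure_lebesgue_on) (simp add: unit_cube_cbox)

lemma space_MM: "space (MM :: (real^'n) measure) = unit_cube"
  by (simp add: space_restrict_space)

definition bm :: "(real^'n \<Rightarrow> real) \<Rightarrow> bool" where
  "bm \<phi> \<longleftrightarrow> \<phi> \<in> borel_measurable MM \<and> (\<exists>B. \<forall>x\<in>unit_cube. \<bar>\<phi> x\<bar> \<le> B)"

lemma bm_os: "bm (os k)"
  unfolding bm_def by (intro conjI os_meas exI[of _ 1]) (metis abs_of_nonneg os_range)

lemma bm_const: "bm (\<lambda>x. c)"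
  unfolding bm_def by auto

lemma bm_add: "bm \<phi> \<Longrightarrow> bm \<psi> \<Longrightarrow> bm (\<lambda>x. \<phi> x + \<psi> x)"
  unfolding bm_def
proof (elim conjE exE, intro conjI)
  fix B C assume "\<forall>x\<in>unit_cube. \<bar>\<phi> x\<bar> \<le> B" "\<forall>x\<in>unit_cube. \<bar>\<psi> x\<bar> \<le> C"
  then show "\<exists>B. \<forall>x\<in>unit_cube. \<bar>\<phi> x + \<psi> x\<bar> \<le> B"
    by (intro exI[of _ "B + C"]) (auto intro: order.trans[OF abs_triangle_ineq] add_mono)
qed auto

lemma bm_diff: "bm \<phi> \<Longrightarrow> bm \<psi> \<Longrightarrow> bm (\<lambda>x. \<phi> x - \<psi> x)"
  unfolding bm_def
proof (elim conjE exE, intro conjI)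
  fix B C assume "\<forall>x\<in>unit_cube. \<bar>\<phi> x\<bar> \<le> B" "\<forall>x\<in>unit_cube. \<bar>\<psi> x\<bar> \<le> C"
  then show "\<exists>B. \<forall>x\<in>unit_cube. \<bar>\<phi> x - \<psi> x\<bar> \<le> B"
    by (intro exI[of _ "B + C"]) (auto intro: order.trans[OF abs_triangle_ineq4] add_mono)
qed auto

lemma bm_mult: fixes \<phi> \<psi> :: "real^'n \<Rightarrow> real" shows "bm \<phi> \<Longrightarrow> bm \<psi> \<Longrightarrow> bm (\<lambda>x. \<phi> x * \<psi> x)"
  unfolding bm_def
proof (elim conjE exE, intro conjI)
  fix B C assume B: "\<forall>x\<in>unit_cube. \<bar>\<phi> x\<bar> \<le> B" and C: "\<forall>x\<in>unit_cube. \<bar>\<psi> x\<bar> \<le> C"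
  show "\<exists>B. \<forall>x\<in>unit_cube. \<bar>\<phi> x * \<psi> x\<bar> \<le> B"
  proof (intro exI[of _ "B * C"] ballI)
    fix x :: "real^'n" assume "x \<in> unit_cube"
    then show "\<bar>\<phi> x * \<psi> x\<bar> \<le> B * C" using B C
      by (auto simp: abs_mult intro!: mult_mono)
  qed
qed auto

lemma bm_sum: "finite S \<Longrightarrow> (\<And>j. j \<in> S \<Longrightarrow> bm (\<phi> j)) \<Longrightarrow> bm (\<lambda>x. \<Sum>j\<in>S. \<phi> j x)"
proof (induction S rule: finite_induct)
  case empty then show ?case by (simp add: bm_const)
next
  case (insert a S) then show ?case by (simp add: bm_add)
qed

lemma bm_lin: "bm (\<lambda>x. \<Sum>j\<in>S. c j * os j x)"
proof (cases "finite S")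
  case True then show ?thesis by (intro bm_sum bm_mult bm_const bm_os)
next
  case False then show ?thesis by (simp add: bm_const)
qed

lemma bm_integrable: "bm \<phi> \<Longrightarrow> integrable MM \<phi>"
  unfolding bm_def
proof (elim conjE exE)
  fix B assume m: "\<phi> \<in> borel_measurable MM" and B: "\<forall>x\<in>unit_cube. \<bar>\<phi> x\<bar> \<le> B"
  show "integrable MM \<phi>"
    by (rule finite_measure.integrable_const_bound[OF fin_MM _ m, of B])
       (use B in \<open>auto simp: space_MM intro!: AE_I2\<close>)
qed

lemma L2_f:
  assumes "f \<in> L2_cube"
  shows "f \<in> borel_measurable MM" "integrable MM (\<lambda>x. (f x)\<^sup>2)"
  using assms by (auto simp: L2_cube_def)

lemma bm_f_integrable:
  fixes f \<phi> :: "real^'n \<Rightarrow> real"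
  assumes "f \<in> L2_cube" "bm \<phi>"
  shows "integrable MM (\<lambda>x. f x * \<phi> x)"
proof -
  obtain B where m: "\<phi> \<in> borel_measurable MM" and B: "\<forall>x\<in>unit_cube. \<bar>\<phi> x\<bar> \<le> B"
    using assms(2) unfolding bm_def by blast
  have B0: "\<bar>B\<bar> \<ge> 0" by simp
  have int: "integrable MM (\<lambda>x. \<bar>B\<bar> * (1 + (f x)\<^sup>2))"
    using L2_f[OF assms(1)] bm_integrable[OF bm_const[of 1]]
    by (intro integrable_mult_right integrable_add) auto
  show ?thesis
  proof (rule Bochner_Integration.integrable_bound[OF int])
    show "(\<lambda>x. f x * \<phi> x) \<in> borel_measurable MM" using L2_f(1)[OF assms(1)] m by measurable
    show "AE x in MM. norm (f x * \<phi> x) \<le> norm (\<bar>B\<bar> * (1 + (f x)\<^sup>2))"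
    proof (intro AE_I2)
      fix x :: "real^'n" assume "x \<in> space MM"
      then have x: "\<bar>\<phi> x\<bar> \<le> \<bar>B\<bar>" using B by (auto simp: space_MM)
      have f: "\<bar>f x\<bar> \<le> 1 + (f x)\<^sup>2"
      proof (cases "\<bar>f x\<bar> \<le> 1")
        case True
        moreover have "0 \<le> (f x)\<^sup>2" by simp
        ultimately show ?thesis by linarith
      next
        case False
        then have "\<bar>f x\<bar> * 1 \<le> \<bar>f x\<bar> * \<bar>f x\<bar>" by (intro mult_left_mono) auto
        then have "\<bar>f x\<bar> \<le> (f x)\<^sup>2" by (simp add: power2_eq_square abs_mult_self_eq)
        then show ?thesis by linarith
      qed
      have "\<bar>f x * \<phi> x\<bar> \<le> (1 + (f x)\<^sup>2) * \<bar>B\<bar>"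
        unfolding abs_mult using f x by (intro mult_mono) auto
      then show "norm (f x * \<phi> x) \<le> norm (\<bar>B\<bar> * (1 + (f x)\<^sup>2))"
        by (simp add: abs_mult mult.commute)
    qed
  qed
qed




lemma os_last: "os (CARD('n)+1) = (\<lambda>x::real^'n. 1)"
  by (simp add: os_def fun_eq_iff)

lemma os_zero[simp]: "os 0 x = 0"
  by (simp add: os_def)

lemma sum_delta_gen: "finite S \<Longrightarrow> (\<Sum>m\<in>S. (if m = a then 1 else 0) * h m) = (if a \<in> S then h a else (0::real))"
proof -
  assume "finite S"
  have "(\<Sum>m\<in>S. (if m = a then 1 else 0) * h m) = (\<Sum>m\<in>S. if m = a then h m else 0)"
    by (intro sum.cong) auto
  then show ?thesis using \<open>finite S\<close> by (simp add: sum.delta')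
qed

lemma gfun_eq:
  assumes "1 \<le> j" "j \<le> CARD('n)"
  shows "g_fun j (x::real^'n) = (\<Sum>m=1..CARD('n)+1. Cm CARD('n) j m * os m x)"
proof -
  let ?N = "CARD('n)"
  let ?c = "(real ?N+1)*(real ?N+2)"
  have "(\<Sum>m=1..?N+1. Cm ?N j m * os m x) = (\<Sum>m=1..?N+1. - ?c * ((if m = j+1 then 1 else 0) * os m x
      - 2 * ((if m = j then 1 else 0) * os m x) + (if m = j-1 then 1 else 0) * os m x))"
    using assms by (intro sum.cong refl) (auto simp: Cm_def ring_distribs)
  also have "\<dots> = - ?c * ((\<Sum>m=1..?N+1. (if m = j+1 then 1 else 0) * os m x)
      - 2 * (\<Sum>m=1..?N+1. (if m = j then 1 else 0) * os m x) + (\<Sum>m=1..?N+1. (if m = j-1 then 1 else 0) * os m x))"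
    by (simp only: sum_distrib_left[symmetric] sum.distrib sum_subtractf)
  also have "\<dots> = - ?c * (os (j+1) x - 2 * os j x + os (j-1) x)"
  proof -
    have a: "(\<Sum>m=1..?N+1. (if m = j+1 then 1 else 0) * os m x) = os (j+1) x"
      using assms by (subst sum_delta_gen) auto
    have b: "(\<Sum>m=1..?N+1. (if m = j then 1 else 0) * os m x) = os j x"
      using assms by (subst sum_delta_gen) auto
    have c: "(\<Sum>m=1..?N+1. (if m = j-1 then 1 else 0) * os m x) = os (j-1) x"
      using assms by (subst sum_delta_gen) auto
    show ?thesis unfolding a b c ..
  qed
  finally show ?thesis unfolding g_fun_def by (simp add: algebra_simps)
qed

lemma inner_lin:
  fixes \<phi> :: "real^'n \<Rightarrow> real"
  assumes "finite S" "\<And>m. m \<in> S \<Longrightarrow> integrable MM (\<lambda>x. \<phi> x * os m x)"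
  shows "L2_inner \<phi> (\<lambda>x. \<Sum>m\<in>S. c m * os m x) = (\<Sum>m\<in>S. c m * L2_inner \<phi> (os m))"
proof -
  have "L2_inner \<phi> (\<lambda>x. \<Sum>m\<in>S. c m * os m x) = (\<integral>x. (\<Sum>m\<in>S. c m * (\<phi> x * os m x)) \<partial>MM)"
    unfolding L2_inner_def by (simp add: sum_distrib_left mult_ac)
  also have "\<dots> = (\<Sum>m\<in>S. (\<integral>x. c m * (\<phi> x * os m x) \<partial>MM))"
    using assms by (intro Bochner_Integration.integral_sum[where f="\<lambda>m x. c m * (\<phi> x * os m x)"] integrable_mult_right) auto
  also have "\<dots> = (\<Sum>m\<in>S. c m * L2_inner \<phi> (os m))"
    unfolding L2_inner_def by simp
  finally show ?thesis .
qed

lemma coef_eq: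
  fixes f :: "real^'n \<Rightarrow> real"
  assumes f: "f \<in> L2_cube" and j: "j \<in> {1..CARD('n)+1}"
  shows "coef f j = (\<Sum>m=1..CARD('n)+1. Cm CARD('n) j m * L2_inner f (os m))"
proof (cases "j \<le> CARD('n)")
  case True
  have "coef f j = L2_inner f (g_fun j)" using True by (simp add: coef_def)
  also have "g_fun j = (\<lambda>x::real^'n. \<Sum>m=1..CARD('n)+1. Cm CARD('n) j m * os m x)"
    using gfun_eq[of j] True j by auto
  also have "L2_inner f \<dots> = (\<Sum>m=1..CARD('n)+1. Cm CARD('n) j m * L2_inner f (os m))"
    by (intro inner_lin bm_f_integrable[OF f] bm_os) auto
  finally show ?thesis .
next
  case False
  then have jN: "j = CARD('n)+1" using j by auto
  let ?N = "CARD('n)"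
  have "(\<Sum>m=1..?N+1. Cm ?N j m * L2_inner f (os m)) =
      (\<Sum>m=1..?N+1. (real ?N+1)^2 * ((if m = ?N+1 then 1 else 0) * L2_inner f (os m))
        - (real ?N+1)*(real ?N+2) * ((if m = ?N then 1 else 0) * L2_inner f (os m)))"
    using jN by (intro sum.cong refl) (auto simp: Cm_def)
  also have "\<dots> = (real ?N+1)^2 * L2_inner f (os (?N+1)) - (real ?N+1)*(real ?N+2) * L2_inner f (os ?N)"
    by (simp add: sum_subtractf sum_distrib_left[symmetric] sum_delta_gen)
  also have "\<dots> = coef f j"
    using jN unfolding os_last[where 'n='n] by (simp add: coef_def)
  finally show ?thesis by simp
qed

lemma L2_inner_sym: "L2_inner u v = L2_inner v u"
  unfolding L2_inner_def by (simp add: mult.commute)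

lemma ortho:
  fixes f :: "real^'n \<Rightarrow> real"
  assumes f: "f \<in> L2_cube" and k: "k \<in> {1..CARD('n)+1}"
  shows "(\<Sum>j=1..CARD('n)+1. coef f j * L2_inner (os j :: real^'n \<Rightarrow> real) (os k)) = L2_inner f (os k)"
proof -
  let ?N = "CARD('n)"
  let ?c = "(real ?N+1)*(real ?N+2)"
  have c0: "?c \<noteq> 0" by simp
  have G: "L2_inner (os j :: real^'n \<Rightarrow> real) (os k) = Kf j k / ?c" if "j \<in> {1..?N+1}" for j
    using gram[where 'n='n, of j k] that k by (simp add: Kf_def)
  have "(\<Sum>j=1..?N+1. coef f j * L2_inner (os j :: real^'n \<Rightarrow> real) (os k))
      = (\<Sum>j=1..?N+1. (\<Sum>m=1..?N+1. Cm ?N j m * L2_inner f (os m)) * (Kf j k / ?c))"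
    using f by (intro sum.cong refl) (simp add: G coef_eq)
  also have "\<dots> = (\<Sum>m=1..?N+1. L2_inner f (os m) * ((\<Sum>j=1..?N+1. Cm ?N j m * Kf j k) / ?c))"
  proof -
    have "(\<Sum>j=1..?N+1. (\<Sum>m=1..?N+1. Cm ?N j m * L2_inner f (os m)) * (Kf j k / ?c))
        = (\<Sum>j=1..?N+1. \<Sum>m=1..?N+1. L2_inner f (os m) * (Cm ?N j m * Kf j k / ?c))"
      unfolding sum_distrib_right by (intro sum.cong refl) (simp add: algebra_simps)
    also have "\<dots> = (\<Sum>m=1..?N+1. \<Sum>j=1..?N+1. L2_inner f (os m) * (Cm ?N j m * Kf j k / ?c))"
      by (rule sum.swap)
    also have "\<dots> = (\<Sum>m=1..?N+1. L2_inner f (os m) * ((\<Sum>j=1..?N+1. Cm ?N j m * Kf j k) / ?c))"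
      by (intro sum.cong refl) (simp only: sum_divide_distrib sum_distrib_left)
    finally show ?thesis .
  qed
  also have "\<dots> = (\<Sum>m=1..?N+1. L2_inner f (os m) * (if m = k then 1 else 0))"
  proof (intro sum.cong refl)
    fix m assume m: "m \<in> {1..?N+1}"
    have e: "(\<Sum>j=1..?N+1. Cm ?N j m * Kf j k) = ?c * (if m = k then 1 else 0)"
      using m k by (intro Cm_K) auto
    show "L2_inner f (os m) * ((\<Sum>j=1..?N+1. Cm ?N j m * Kf j k) / ?c) = L2_inner f (os m) * (if m = k then 1 else 0)"
      unfolding e using c0 by simp
  qed
  also have "\<dots> = L2_inner f (os k)" using k by (simp add: sum.delta' if_distrib[where f="\<lambda>t. _ * t"] cong: if_cong)
  finally show ?thesis .
qed




lemma integrable_sq_diff: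
  fixes f \<phi> :: "real^'n \<Rightarrow> real"
  assumes f: "f \<in> L2_cube" and b: "bm \<phi>"
  shows "integrable MM (\<lambda>x. (f x - \<phi> x)\<^sup>2)"
proof -
  have "integrable MM (\<lambda>x. (f x)\<^sup>2 - 2 * (f x * \<phi> x) + \<phi> x * \<phi> x)"
    using L2_f(2)[OF f] bm_f_integrable[OF f b] bm_integrable[OF bm_mult[OF b b]]
    by (intro Bochner_Integration.integrable_add Bochner_Integration.integrable_diff Bochner_Integration.integrable_mult_right) auto
  moreover have "(\<lambda>x. (f x - \<phi> x)\<^sup>2) = (\<lambda>x. (f x)\<^sup>2 - 2 * (f x * \<phi> x) + \<phi> x * \<phi> x)"
    by (auto simp: fun_eq_iff power2_eq_square algebra_simps)
  ultimately show ?thesis by simp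
qed

lemma decomp:
  fixes f :: "real^'n \<Rightarrow> real"
  assumes f: "f \<in> L2_cube"
  defines "P \<equiv> (\<lambda>x. \<Sum>j=1..CARD('n)+1. coef f j * os j x)"
  shows "L2_dist2 f (\<lambda>x. \<Sum>j=1..CARD('n)+1. c j * os j x)
       = L2_dist2 f P + (\<integral>x. (P x - (\<Sum>j=1..CARD('n)+1. c j * os j x))\<^sup>2 \<partial>MM)"
proof -
  let ?N = "CARD('n)"
  define H where "H = (\<lambda>x::real^'n. \<Sum>j=1..?N+1. c j * os j x)"
  define D where "D = (\<lambda>x::real^'n. \<Sum>j=1..?N+1. (coef f j - c j) * os j x)"
  have DPH: "D x = P x - H x" for x
    unfolding D_def P_def H_def by (simp add: sum_subtractf left_diff_distrib)
  have bP: "bm P" unfolding P_def by (rule bm_lin)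
  have bH: "bm H" unfolding H_def by (rule bm_lin)
  have bD: "bm D" unfolding D_def by (rule bm_lin)
  have pt: "(f x - H x)\<^sup>2 = (f x - P x)\<^sup>2 + 2 * (f x * D x - P x * D x) + D x * D x" for x
    unfolding DPH by (simp add: power2_eq_square algebra_simps)
  have i1: "integrable MM (\<lambda>x. (f x - P x)\<^sup>2)" by (rule integrable_sq_diff[OF f bP])
  have i2: "integrable MM (\<lambda>x. f x * D x)" by (rule bm_f_integrable[OF f bD])
  have i3: "integrable MM (\<lambda>x. P x * D x)" by (rule bm_integrable[OF bm_mult[OF bP bD]])
  have i4: "integrable MM (\<lambda>x. D x * D x)" by (rule bm_integrable[OF bm_mult[OF bD bD]])
  have "L2_dist2 f H = (\<integral>x. (f x - P x)\<^sup>2 + 2 * (f x * D x - P x * D x) + D x * D x \<partial>MM)"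
    unfolding L2_dist2_def pt ..
  also have "\<dots> = (\<integral>x. (f x - P x)\<^sup>2 \<partial>MM) + 2 * ((\<integral>x. f x * D x \<partial>MM) - (\<integral>x. P x * D x \<partial>MM))
      + (\<integral>x. D x * D x \<partial>MM)"
    using i1 i2 i3 i4 by simp
  also have "(\<integral>x. f x * D x \<partial>MM) = (\<Sum>j=1..?N+1. (coef f j - c j) * L2_inner f (os j))"
    unfolding D_def L2_inner_def[symmetric]
    by (intro inner_lin bm_f_integrable[OF f] bm_os) auto
  also have "(\<integral>x. P x * D x \<partial>MM) = (\<Sum>j=1..?N+1. (coef f j - c j) * L2_inner P (os j))"
    unfolding D_def L2_inner_def[symmetric]
    by (intro inner_lin bm_integrable bm_mult bP bm_os) auto
  also have "(\<Sum>j=1..?N+1. (coef f j - c j) * L2_inner P (os j)) = (\<Sum>j=1..?N+1. (coef f j - c j) * L2_inner f (os j))"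
  proof (intro sum.cong refl arg_cong2[where f="(*)"])
    fix j assume j: "j \<in> {1..?N+1}"
    have "L2_inner P (os j) = L2_inner (os j) P" by (rule L2_inner_sym)
    also have "\<dots> = (\<Sum>k=1..?N+1. coef f k * L2_inner (os j :: real^'n \<Rightarrow> real) (os k))"
      unfolding P_def by (subst inner_lin) (auto intro!: bm_integrable bm_mult bm_os)
    also have "\<dots> = (\<Sum>k=1..?N+1. coef f k * L2_inner (os k :: real^'n \<Rightarrow> real) (os j))"
      by (simp add: L2_inner_sym)
    also have "\<dots> = L2_inner f (os j)" by (rule ortho[OF f j])
    finally show "L2_inner P (os j) = L2_inner f (os j)" .
  qed
  finally have "L2_dist2 f H = (\<integral>x. (f x - P x)\<^sup>2 \<partial>MM) + (\<integral>x. D x * D x \<partial>MM)" by simp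
  moreover have "(\<integral>x. D x * D x \<partial>MM) = (\<integral>x. (P x - H x)\<^sup>2 \<partial>MM)"
    by (simp add: DPH power2_eq_square)
  ultimately show ?thesis unfolding L2_dist2_def H_def by simp
qed

theorem proposition2:
  fixes f :: "real^'n \<Rightarrow> real"
  assumes "f \<in> L2_cube"
  shows "\<forall>g \<in> V_L. ((\<forall>h \<in> V_L. L2_dist2 f g \<le> L2_dist2 f h)
            \<longleftrightarrow> (AE x in lebesgue_on unit_cube.
                  g x = (\<Sum>j=1..CARD('n)+1. coef f j * os j x)))"
proof
  fix g :: "real^'n \<Rightarrow> real" assume "g \<in> V_L"
  then obtain c where g: "g = (\<lambda>x. \<Sum>j=1..CARD('n)+1. c j * os j x)" unfolding V_L_def by blast
  define P where "P = (\<lambda>x::real^'n. \<Sum>j=1..CARD('n)+1. coef f j * os j x)"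
  have PV: "P \<in> V_L" unfolding P_def V_L_def by blast
  define Q where "Q h = (\<integral>x. (P x - h x)\<^sup>2 \<partial>MM)" for h :: "real^'n \<Rightarrow> real"
  have dec: "L2_dist2 f h = L2_dist2 f P + Q h" if hV: "h \<in> V_L" for h
  proof -
    obtain d where "h = (\<lambda>x. \<Sum>j=1..CARD('n)+1. d j * os j x)" using hV unfolding V_L_def by blast
    then show ?thesis using decomp[OF assms, of d] unfolding Q_def P_def by simp
  qed
  have Qnn: "0 \<le> Q h" for h unfolding Q_def by simp
  have bPg: "bm (\<lambda>x. (P x - g x)\<^sup>2)"
    unfolding P_def g power2_eq_square by (intro bm_mult bm_diff bm_lin)
  show "(\<forall>h \<in> V_L. L2_dist2 f g \<le> L2_dist2 f h) \<longleftrightarrow>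
      (AE x in lebesgue_on unit_cube. g x = (\<Sum>j=1..CARD('n)+1. coef f j * os j x))"
  proof
    assume "\<forall>h \<in> V_L. L2_dist2 f g \<le> L2_dist2 f h"
    then have "L2_dist2 f g \<le> L2_dist2 f P" using PV by blast
    then have "Q g \<le> 0" using dec[OF \<open>g \<in> V_L\<close>] by simp
    then have "Q g = 0" using Qnn[of g] by simp
    then have "AE x in MM. (P x - g x)\<^sup>2 = 0"
      unfolding Q_def using bm_integrable[OF bPg] by (subst (asm) integral_nonneg_eq_0_iff_AE) auto
    then show "AE x in lebesgue_on unit_cube. g x = (\<Sum>j=1..CARD('n)+1. coef f j * os j x)"
      by eventually_elim (simp add: P_def)
  next
    assume ae: "AE x in lebesgue_on unit_cube. g x = (\<Sum>j=1..CARD('n)+1. coef f j * os j x)"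
    have "Q g = (\<integral>x. 0 \<partial>(MM :: (real^'n) measure))"
      unfolding Q_def
    proof (rule Bochner_Integration.integral_cong_AE)
      show "(\<lambda>x. (P x - g x)\<^sup>2) \<in> borel_measurable MM" using bPg by (simp add: bm_def)
      show "AE x in MM. (P x - g x)\<^sup>2 = 0" using ae by eventually_elim (simp add: P_def)
    qed simp
    then have "Q g = 0" by simp
    then show "\<forall>h \<in> V_L. L2_dist2 f g \<le> L2_dist2 f h"
      using dec[OF \<open>g \<in> V_L\<close>] dec Qnn by auto
  qed
qed


end
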